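(* Let $j,k,\ell$ be integers with $3\leq j+2\leq\ell\leq k$, and let $G$ be a graph on $n$ vertices with minimum degree $\delta(G)>\frac{(k-1)n}{k}$ and at least two $K_{k+1}$-components. Suppose $G$ does not contain the configuration $(\dagger^{(p)})^k_q$ for all pairs $p,q$ of positive integers such that $p<q<\ell$, or such that $j<p<q=\ell$. Then $G$ does not contain the configuration $(\dagger^{(j)})^k_\ell$.
   Context: A $K_{k+1}$-walk in $G$ is a sequence of copies of $K_k$ in which consecutive copies lie in a common copy of $K_{k+1}$; the endpoints are then $K_{k+1}$-connected, and the equivalence classes of copies of $K_k$ are the $K_{k+1}$-components. For integers $1\leq j<\ell\leq k$, $G$ contains the configuration $(\dagger^{(j)})^k_\ell$ if there are (not necessarily distinct) vertices $u_1,\dots,u_k$, $v_{j+1},\dots,v_\ell$ and $w_{p1},\dots,w_{p(\ell-1)}$ for $j<p\leq\ell$ such that: (CG1) $u_1\dots u_k$ is a copy of $K_k$ lying in some $K_{k+1}$-component $C$ of $G$; (CG2) $u_1\dots u_jv_{j+1}\dots v_\ell u_{\ell+1}\dots u_k$ is a copy of $K_k$ in $G$ not in $C$; (CG3) for every $j<p\leq\ell$, $u_pw_{p1}\dots w_{p(\ell-1)}u_{\ell+1}\dots u_k$ is a copy of $K_k$ in $G$ not in $C$. *)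

theory Defs
  imports Complex_Main
begin

definition simple_graph :: "'a set \<Rightarrow> ('a \<Rightarrow> 'a \<Rightarrow> bool) \<Rightarrow> bool" where
  "simple_graph V E \<longleftrightarrow> finite V \<and> (\<forall>x y. E x y \<longrightarrow> x \<in> V \<and> y \<in> V)
     \<and> (\<forall>x y. E x y \<longrightarrow> E y x) \<and> (\<forall>x. \<not> E x x)"

definition degree :: "'a set \<Rightarrow> ('a \<Rightarrow> 'a \<Rightarrow> bool) \<Rightarrow> 'a \<Rightarrow> nat" where
  "degree V E v = card {u \<in> V. E v u}"

text \<open>A copy of K_k in G, identified with its (k-element) vertex set.\<close>
definition is_clique :: "'a set \<Rightarrow> ('a \<Rightarrow> 'a \<Rightarrow> bool) \<Rightarrow> nat \<Rightarrow> 'a set \<Rightarrow> bool" where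
  "is_clique V E k S \<longleftrightarrow> S \<subseteq> V \<and> finite S \<and> card S = k
     \<and> (\<forall>x\<in>S. \<forall>y\<in>S. x \<noteq> y \<longrightarrow> E x y)"

definition kstep :: "'a set \<Rightarrow> ('a \<Rightarrow> 'a \<Rightarrow> bool) \<Rightarrow> nat \<Rightarrow> 'a set \<Rightarrow> 'a set \<Rightarrow> bool" where
  "kstep V E k S T \<longleftrightarrow> is_clique V E k S \<and> is_clique V E k T
     \<and> (\<exists>R. is_clique V E (k+1) R \<and> S \<subseteq> R \<and> T \<subseteq> R)"

definition kconn :: "'a set \<Rightarrow> ('a \<Rightarrow> 'a \<Rightarrow> bool) \<Rightarrow> nat \<Rightarrow> 'a set \<Rightarrow> 'a set \<Rightarrow> bool" where
  "kconn V E k S T \<longleftrightarrow> is_clique V E k S \<and> (kstep V E k)\<^sup>*\<^sup>* S T"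

definition kcomponents :: "'a set \<Rightarrow> ('a \<Rightarrow> 'a \<Rightarrow> bool) \<Rightarrow> nat \<Rightarrow> 'a set set set" where
  "kcomponents V E k = {C. \<exists>S. is_clique V E k S \<and> C = {T. kconn V E k S T}}"

text \<open>The configuration (dagger^(j))^k_l. The component C of CG1 is the component
of the copy u_1...u_k, i.e. the set of copies K_{k+1}-connected to it.\<close>
definition config :: "'a set \<Rightarrow> ('a \<Rightarrow> 'a \<Rightarrow> bool) \<Rightarrow> nat \<Rightarrow> nat \<Rightarrow> nat \<Rightarrow> bool" where
  "config V E k j l \<longleftrightarrow>
    (\<exists>(u :: nat \<Rightarrow> 'a) (v :: nat \<Rightarrow> 'a) (w :: nat \<Rightarrow> nat \<Rightarrow> 'a).
       is_clique V E k (u ` {1..k})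
     \<and> is_clique V E k (u ` {1..j} \<union> v ` {j+1..l} \<union> u ` {l+1..k})
     \<and> \<not> kconn V E k (u ` {1..k}) (u ` {1..j} \<union> v ` {j+1..l} \<union> u ` {l+1..k})
     \<and> (\<forall>p. j < p \<and> p \<le> l \<longrightarrow>
          is_clique V E k (insert (u p) (w p ` {1..l-1}) \<union> u ` {l+1..k})
        \<and> \<not> kconn V E k (u ` {1..k}) (insert (u p) (w p ` {1..l-1}) \<union> u ` {l+1..k})))"

end

theory Submission
  imports Defs
begin

lemma kconn_c1: "kconn V E k S T \<Longrightarrow> is_clique V E k S"
  by (simp add: kconn_def)

lemma kconn_c2: "kconn V E k S T \<Longrightarrow> is_clique V E k T"
  unfolding kconn_def
proof -
  assume "is_clique V E k S \<and> (kstep V E k)\<^sup>*\<^sup>* S T"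
  then have "(kstep V E k)\<^sup>*\<^sup>* S T" "is_clique V E k S" by auto
  then show "is_clique V E k T"
    by (induction rule: rtranclp_induct) (auto simp: kstep_def)
qed

lemma kconn_trans: "kconn V E k A B \<Longrightarrow> kconn V E k B C \<Longrightarrow> kconn V E k A C"
  unfolding kconn_def by auto

lemma kconn_sym: "kconn V E k A B \<Longrightarrow> kconn V E k B A"
proof -
  assume h: "kconn V E k A B"
  have "(kstep V E k)\<^sup>*\<^sup>* A B" using h by (simp add: kconn_def)
  then have "(kstep V E k)\<^sup>*\<^sup>* B A"
  proof (induction rule: rtranclp_induct)
    case base then show ?case by simp
  next
    case (step y z)
    have "kstep V E k z y" using step(2) unfolding kstep_def by blast
    then show ?case using step(3) by (rule converse_rtranclp_into_rtranclp)
  qed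
  then show ?thesis using kconn_c2[OF h] by (simp add: kconn_def)
qed

lemma common_nbr:
  assumes G: "simple_graph V E" and k: "k \<ge> 1"
    and deg: "\<forall>v\<in>V. real (degree V E v) > real (k - 1) * real (card V) / real k"
    and S: "S \<subseteq> V" "card S \<le> k" and Vne: "V \<noteq> {}"
  shows "\<exists>z\<in>V. z \<notin> S \<and> (\<forall>s\<in>S. E z s)"
proof -
  have fV: "finite V" and sym: "\<And>x y. E x y \<Longrightarrow> E y x" and irr: "\<And>x. \<not> E x x"
    using G by (auto simp: simple_graph_def)
  have fS: "finite S" using S fV finite_subset by blast
  show ?thesis
  proof (cases "S = {}")
    case True then show ?thesis using Vne by auto
  next
    case False
    define M where "M s = {u \<in> V. \<not> E s u}" for s
    have cM: "real (card (M s)) < real (card V) / real k" if "s \<in> S" for s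
    proof -
      have "V = {u \<in> V. E s u} \<union> M s" "{u \<in> V. E s u} \<inter> M s = {}" by (auto simp: M_def)
      then have "card V = card {u \<in> V. E s u} + card (M s)"
        using fV by (metis card_Un_disjoint finite_Un)
      then have e: "real (card (M s)) = real (card V) - real (degree V E s)"
        by (simp add: degree_def)
      have d: "real (degree V E s) > real (k - 1) * real (card V) / real k" using deg S that by auto
      have "real (k - 1) = real k - 1" using k by simp
      then have "real (k - 1) * real (card V) / real k = real (card V) - real (card V) / real k"
        using k by (simp add: field_simps)
      then show ?thesis using e d by linarith
    qed
    have "real (card (\<Union>s\<in>S. M s)) \<le> (\<Sum>s\<in>S. real (card (M s)))"
      using card_UN_le[OF fS, of M] by (metis of_nat_le_iff of_nat_sum)
    also have "\<dots> < (\<Sum>s\<in>S. real (card V) / real k)"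
      by (rule sum_strict_mono[OF fS False]) (use cM in auto)
    also have "\<dots> = real (card S) * real (card V) / real k" by simp
    also have "\<dots> \<le> real (card V)"
      using S(2) k by (simp add: field_simps mult_right_mono)
    finally have "card (\<Union>s\<in>S. M s) < card V" by simp
    moreover have "(\<Union>s\<in>S. M s) \<subseteq> V" by (auto simp: M_def)
    ultimately obtain z where z: "z \<in> V" "z \<notin> (\<Union>s\<in>S. M s)" by (metis subsetI subset_antisym less_irrefl)
    then have "\<forall>s\<in>S. E z s" using sym by (auto simp: M_def)
    moreover have "z \<notin> S" using \<open>\<forall>s\<in>S. E z s\<close> irr by auto
    ultimately show ?thesis using z by auto
  qed
qed

lemma ex_img: "finite B \<Longrightarrow> card B = card A \<Longrightarrow> finite A \<Longrightarrow> \<exists>f. f ` A = B"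
  by (metis bij_betw_imp_surj_on finite_same_card_bij)

lemma swap:
  assumes nc: "\<not> config V E k (l-1) l"
    and lk: "l \<le> k" "1 \<le> l"
    and K: "is_clique V E k K" and RK: "R \<subseteq> K" and cR: "card R = k - l"
    and xK: "x \<in> K" and xR: "x \<notin> R"
    and K': "is_clique V E k (insert y (K - {x}))"
    and W: "is_clique V E k W" "insert x R \<subseteq> W" "\<not> kconn V E k K W"
  shows "kconn V E k K (insert y (K - {x}))"
proof (rule ccontr)
  assume nk: "\<not> kconn V E k K (insert y (K - {x}))"
  have fK: "finite K" "card K = k" using K by (auto simp: is_clique_def)
  have fW: "finite W" "card W = k" using W by (auto simp: is_clique_def)
  define A where "A = K - R - {x}"
  have fA: "finite A" using fK by (simp add: A_def)
  have "card (insert x R) = k - l + 1" using cR xR fK RK finite_subset by fastforce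
  moreover have "insert x R \<subseteq> K" using RK xK by auto
  ultimately have "card (K - insert x R) = l - 1" using fK lk
    card_Diff_subset[OF finite_subset[OF \<open>insert x R \<subseteq> K\<close> fK(1)] \<open>insert x R \<subseteq> K\<close>]
    by simp
  moreover have "K - insert x R = A" by (auto simp: A_def)
  ultimately have cA: "card A = l - 1" by simp
  have "card A = card {1..l-1}" using cA by simp
  then obtain f where f: "f ` {1..l-1} = A" using ex_img[OF fA] by blast
  have fR: "finite R" using RK fK(1) by (rule finite_subset)
  have "card R = card {l+1..k}" using cR by simp
  then obtain h where h: "h ` {l+1..k} = R" using ex_img[OF fR] by blast
  define B where "B = W - insert x R"
  have "card B = l - 1" unfolding B_def using fW \<open>card (insert x R) = k - l + 1\<close> lk
    card_Diff_subset[OF finite_subset[OF W(2) fW(1)] W(2)] by simp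
  then have "card B = card {1..l-1}" by simp
  moreover have "finite B" using fW by (simp add: B_def)
  ultimately obtain g where g: "g ` {1..l-1} = B" using ex_img by blast
  define u where "u i = (if i \<le> l - 1 then f i else if i = l then x else h i)" for i
  have u1: "u ` {1..l-1} = A" unfolding f[symmetric] by (rule image_cong) (auto simp: u_def)
  have u3: "u ` {l+1..k} = R" unfolding h[symmetric] by (rule image_cong) (auto simp: u_def)
  have ul: "u l = x" using lk by (auto simp: u_def)
  have "{1..k} = {1..l-1} \<union> {l} \<union> {l+1..k}" using lk by auto
  then have uk: "u ` {1..k} = K" using u1 u3 ul RK xK by (auto simp: A_def)
  have vset: "(\<lambda>_. y) ` {l - 1 + 1..l} = {y}" using lk by auto
  have s2: "u ` {1..l-1} \<union> (\<lambda>_. y) ` {l - 1 + 1..l} \<union> u ` {l+1..k} = insert y (K - {x})"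
    using u1 u3 vset RK xR by (auto simp: A_def)
  have s3: "insert (u l) ((\<lambda>_. g) l ` {1..l-1}) \<union> u ` {l+1..k} = W"
    using ul g u3 W(2) by (auto simp: B_def)
  have "config V E k (l-1) l"
    unfolding config_def
    apply (rule exI[of _ u], rule exI[of _ "\<lambda>_. y"], rule exI[of _ "\<lambda>_. g"])
    apply (intro conjI)
    subgoal using uk K by simp
    subgoal using s2 K' by simp
    subgoal using s2 uk nk by simp
    subgoal
    proof (intro allI impI)
      fix p assume "l - 1 < p \<and> p \<le> l"
      then have p: "p = l" by auto
      show "is_clique V E k (insert (u p) ((\<lambda>_. g) p ` {1..l-1}) \<union> u ` {l+1..k}) \<and>
        \<not> kconn V E k (u ` {1..k}) (insert (u p) ((\<lambda>_. g) p ` {1..l-1}) \<union> u ` {l+1..k})"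
        using s3 W p uk by simp
    qed
    done
  then show False using nc by simp
qed


lemma adj_ins:
  assumes "\<And>x y. E x y \<Longrightarrow> E y x" "\<forall>a\<in>A. \<forall>b\<in>A. a \<noteq> b \<longrightarrow> E a b" "\<forall>a\<in>A. E z a"
  shows "\<forall>a\<in>insert z A. \<forall>b\<in>insert z A. a \<noteq> b \<longrightarrow> E a b"
  using assms by auto

lemma build_Y:
  assumes G: "simple_graph V E" and k: "k \<ge> 1"
    and deg: "\<forall>v\<in>V. real (degree V E v) > real (k - 1) * real (card V) / real k"
    and Vne: "V \<noteq> {}"
    and swapH: "\<And>K x y. is_clique V E k K \<Longrightarrow> R \<subseteq> K \<Longrightarrow> x \<in> Q \<Longrightarrow> x \<in> K \<Longrightarrow>
        is_clique V E k (insert y (K - {x})) \<Longrightarrow> kconn V E k U K \<Longrightarrow>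
        kconn V E k K (insert y (K - {x}))"
    and U: "is_clique V E k U" and UPQR: "U = P \<union> Q \<union> R"
    and dj: "Q \<inter> R = {}" "P \<inter> Q = {}"
    and qs: "qs \<in> Q" and vs: "vs \<notin> P \<union> R" "vs \<in> V" "\<forall>a\<in>P \<union> R. E vs a"
  shows "\<exists>Y. is_clique V E k Y \<and> kconn V E k U Y \<and> P \<union> R \<union> {vs} \<subseteq> Y"
proof -
  have fV: "finite V" and sym: "\<And>x y. E x y \<Longrightarrow> E y x" and irr: "\<And>x. \<not> E x x"
    using G by (auto simp: simple_graph_def)
  have fU: "finite U" using U by (simp add: is_clique_def)
  have fQ: "finite (Q - {qs})" using fU UPQR by auto
  have main: "\<exists>K. is_clique V E k K \<and> kconn V E k U K \<and> U - T \<subseteq> K \<and> (\<forall>z\<in>K - (U - T). E z vs)"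
    if "T \<subseteq> Q - {qs}" for T
  proof -
    have "finite T" using that fQ finite_subset by blast
    then show ?thesis using that
    proof (induction T rule: finite_subset_induct')
      case empty
      then show ?case using U by (intro exI[of _ U]) (auto simp: kconn_def)
    next
      case (insert t T)
      then obtain K where K: "is_clique V E k K" "kconn V E k U K" "U - T \<subseteq> K"
        "\<forall>z\<in>K - (U - T). E z vs" by blast
      have tK: "t \<in> K" using insert K(3) UPQR by auto
      have KV: "K \<subseteq> V" "finite K" "card K = k" using K(1) by (auto simp: is_clique_def)
      define S where "S = insert vs (K - {t})"
      have "card S \<le> card (K - {t}) + 1" unfolding S_def using KV
        by (simp add: card_insert_if)
      then have "card S \<le> k" using KV tK k by simp
      moreover have "S \<subseteq> V" using KV vs by (auto simp: S_def)
      ultimately obtain z where z: "z \<in> V" "z \<notin> S" "\<forall>s\<in>S. E z s"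
        using common_nbr[OF G k deg _ _ Vne] by blast
      define K' where "K' = insert z (K - {t})"
      have cK': "is_clique V E k K'"
      proof -
        have "z \<notin> K - {t}" using z by (auto simp: S_def)
        then have "card K' = card (K - {t}) + 1" unfolding K'_def using KV by simp
        then have "card K' = k" using KV tK k by simp
        moreover have "K' \<subseteq> V" using z KV by (auto simp: K'_def)
        moreover have "\<forall>a\<in>K'. \<forall>b\<in>K'. a \<noteq> b \<longrightarrow> E a b"
          unfolding K'_def by (rule adj_ins[OF sym]) (use K(1) z in \<open>auto simp: is_clique_def S_def\<close>)
        ultimately show ?thesis using KV by (auto simp: is_clique_def K'_def)
      qed
      have RK: "R \<subseteq> K" using K(3) insert(2) insert(3) UPQR dj by auto
      have "kconn V E k K K'"
        unfolding K'_def by (rule swapH[OF K(1) RK _ tK _ K(2)]) (use insert(2) cK' K'_def in auto)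
      then have "kconn V E k U K'" using K(2) kconn_trans by blast
      moreover have "U - insert t T \<subseteq> K'" using K(3) by (auto simp: K'_def)
      moreover have "\<forall>z'\<in>K' - (U - insert t T). E z' vs"
        using K(4) z by (auto simp: K'_def S_def)
      ultimately show ?case using cK' by blast
    qed
  qed
  obtain K where K: "is_clique V E k K" "kconn V E k U K" "U - (Q - {qs}) \<subseteq> K"
        "\<forall>z\<in>K - (U - (Q - {qs})). E z vs" using main[of "Q - {qs}"] by blast
  have UT: "U - (Q - {qs}) = P \<union> R \<union> {qs}" using UPQR dj qs by auto
  have KV: "K \<subseteq> V" "finite K" "card K = k" using K(1) by (auto simp: is_clique_def)
  show ?thesis
  proof (cases "vs \<in> K")
    case True
    then show ?thesis using K UT by auto
  next
    case False
    define K' where "K' = insert vs (K - {qs})"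
    have qsK: "qs \<in> K" using K(3) UT by auto
    have cK': "is_clique V E k K'"
    proof -
      have "vs \<notin> K - {qs}" using False by simp
      then have "card K' = card (K - {qs}) + 1" unfolding K'_def using KV by simp
      then have "card K' = k" using KV qsK k by simp
      moreover have "K' \<subseteq> V" using vs KV by (auto simp: K'_def)
      moreover have "\<forall>a\<in>K - {qs}. E vs a"
      proof
        fix a assume a: "a \<in> K - {qs}"
        show "E vs a"
        proof (cases "a \<in> P \<union> R")
          case True then show ?thesis using vs by auto
        next
          case False then have "a \<in> K - (U - (Q - {qs}))" using a UT by auto
          then show ?thesis using K(4) sym by auto
        qed
      qed
      moreover have "\<forall>a\<in>K'. \<forall>b\<in>K'. a \<noteq> b \<longrightarrow> E a b"
        unfolding K'_def by (rule adj_ins[OF sym]) (use K(1) calculation(3) in \<open>auto simp: is_clique_def\<close>)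
      ultimately show ?thesis using KV by (auto simp: is_clique_def K'_def)
    qed
    have RK: "R \<subseteq> K" using K(3) UT by auto
    have "kconn V E k K K'" unfolding K'_def
      by (rule swapH[OF K(1) RK qs qsK _ K(2)]) (use cK' K'_def in auto)
    then have "kconn V E k U K'" using K(2) kconn_trans by blast
    moreover have "P \<union> R \<union> {vs} \<subseteq> K'" using K(3) UT dj qs by (auto simp: K'_def)
    ultimately show ?thesis using cK' by blast
  qed
qed


theorem lemma5p1:
  fixes V :: "'a set" and E :: "'a \<Rightarrow> 'a \<Rightarrow> bool" and j k l :: nat
  assumes "simple_graph V E"
    and "3 \<le> j + 2" and "j + 2 \<le> l" and "l \<le> k"
    and "\<forall>v\<in>V. real (degree V E v) > real (k - 1) * real (card V) / real k"
    and "\<exists>C1\<in>kcomponents V E k. \<exists>C2\<in>kcomponents V E k. C1 \<noteq> C2"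
    and "\<forall>p q. 0 < p \<and> p < q \<and> q < l \<longrightarrow> \<not> config V E k p q"
    and "\<forall>p q. j < p \<and> p < q \<and> q = l \<longrightarrow> \<not> config V E k p q"
  shows "\<not> config V E k j l"
proof
  assume cfg: "config V E k j l"
  note G = assms(1) and deg = assms(5) and H8 = assms(8)
  have j1: "1 \<le> j" and jl: "j + 2 \<le> l" and lk: "l \<le> k" using assms(2-4) by auto
  have k1: "k \<ge> 1" using jl lk by simp
  obtain u v w where
    c1: "is_clique V E k (u ` {1..k})" and
    c2: "is_clique V E k (u ` {1..j} \<union> v ` {j+1..l} \<union> u ` {l+1..k})" and
    c3: "\<not> kconn V E k (u ` {1..k}) (u ` {1..j} \<union> v ` {j+1..l} \<union> u ` {l+1..k})" and
    c4: "\<forall>p. j < p \<and> p \<le> l \<longrightarrow>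
          is_clique V E k (insert (u p) (w p ` {1..l-1}) \<union> u ` {l+1..k})
        \<and> \<not> kconn V E k (u ` {1..k}) (insert (u p) (w p ` {1..l-1}) \<union> u ` {l+1..k})"
    using cfg unfolding config_def by blast
  define U where "U = u ` {1..k}"
  define P where "P = u ` {1..j}"
  define Q where "Q = u ` {j+1..l}"
  define R where "R = u ` {l+1..k}"
  define D where "D = v ` {j+1..l}"
  define X where "X = P \<union> D \<union> R"
  have fV: "finite V" and sym: "\<And>x y. E x y \<Longrightarrow> E y x" and irr: "\<And>x. \<not> E x x"
    using G by (auto simp: simple_graph_def)
  have Uc: "is_clique V E k U" using c1 by (simp add: U_def)
  have Xc: "is_clique V E k X" using c2 by (simp add: X_def P_def D_def R_def)
  have nUX: "\<not> kconn V E k U X" using c3 by (simp add: U_def X_def P_def D_def R_def)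
  have UV: "U \<subseteq> V" "finite U" "card U = k" using Uc by (auto simp: is_clique_def)
  have XV: "X \<subseteq> V" "finite X" "card X = k" using Xc by (auto simp: is_clique_def)
  have ck: "card {1..k} = k" by simp
  have "card (u ` {1..k}) = card {1..k}" using UV(3) ck unfolding U_def by linarith
  then have inj: "inj_on u {1..k}" by (rule eq_card_imp_inj_on[OF finite_atLeastAtMost])
  have ivl: "{1..k} = {1..j} \<union> {j+1..l} \<union> {l+1..k}" using jl lk by auto
  have UPQR: "U = P \<union> Q \<union> R" unfolding U_def P_def Q_def R_def using ivl by (simp add: image_Un)
  have djQR: "Q \<inter> R = {}" and djPQ: "P \<inter> Q = {}" and djPR: "P \<inter> R = {}"
  proof -
    have d: "u ` B \<inter> u ` C = {}" if "B \<subseteq> {1..k}" "C \<subseteq> {1..k}" "B \<inter> C = {}" for B C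
      using inj_on_image_Int[OF inj that(1,2)] that(3) by simp
    show "Q \<inter> R = {}" unfolding Q_def R_def by (rule d) (use jl lk in auto)
    show "P \<inter> Q = {}" unfolding P_def Q_def by (rule d) (use jl lk in auto)
    show "P \<inter> R = {}" unfolding P_def R_def by (rule d) (use jl lk in auto)
  qed
  have cP: "card P = j" unfolding P_def using jl lk
    by (subst card_image[OF inj_on_subset[OF inj]]) auto
  have cR: "card R = k - l" unfolding R_def using jl lk
    by (subst card_image[OF inj_on_subset[OF inj]]) auto
  have fPR: "finite P" "finite R" by (auto simp: P_def R_def)
  have cPR: "card (P \<union> R) = j + (k - l)" using card_Un_disjoint[OF fPR djPR] cP cR by simp
  have Vne: "V \<noteq> {}" using UV k1 by auto
  have cD: "card D \<le> l - j" unfolding D_def using card_image_le[of "{j+1..l}" v] by simp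
  have vPR: "v s \<notin> P \<union> R" if s: "s \<in> {j+1..l}" for s
  proof
    assume vs: "v s \<in> P \<union> R"
    have "X = (P \<union> R) \<union> (D - {v s})" using vs s by (auto simp: X_def D_def)
    then have "card X \<le> card (P \<union> R) + card (D - {v s})" by (metis card_Un_le)
    moreover have "card (D - {v s}) = card D - 1" using s by (simp add: D_def)
    ultimately have "card X \<le> j + (k - l) + (l - j) - 1" using cPR cD jl
      by linarith
    then show False using XV jl lk by linarith
  qed
  have vV: "v s \<in> V" and vadj: "\<forall>a\<in>P \<union> R. E (v s) a" if s: "s \<in> {j+1..l}" for s
  proof -
    have "v s \<in> X" using s by (auto simp: X_def D_def)
    then show "v s \<in> V" using XV by auto
    show "\<forall>a\<in>P \<union> R. E (v s) a"
    proof
      fix a assume a: "a \<in> P \<union> R"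
      have ne: "v s \<noteq> a" using vPR[OF s] a by blast
      have aX: "a \<in> X" using a unfolding X_def by blast
      have "\<forall>x\<in>X. \<forall>y\<in>X. x \<noteq> y \<longrightarrow> E x y" using Xc unfolding is_clique_def by blast
      then show "E (v s) a" using \<open>v s \<in> X\<close> aX ne by blast
    qed
  qed
  have nc: "\<not> config V E k (l-1) l" using H8 jl by auto
  have swapH: "kconn V E k K (insert y (K - {x}))"
    if K: "is_clique V E k K" "R \<subseteq> K" "x \<in> Q" "x \<in> K" "is_clique V E k (insert y (K - {x}))"
       "kconn V E k U K" for K x y
  proof -
    obtain p where p: "p \<in> {j+1..l}" "x = u p" using K(3) by (auto simp: Q_def)
    define W where "W = insert (u p) (w p ` {1..l-1}) \<union> R"
    have W: "is_clique V E k W" "\<not> kconn V E k U W" using c4 p by (auto simp: W_def R_def U_def)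
    have "\<not> kconn V E k K W" using W(2) K(6) kconn_trans by blast
    moreover have "insert x R \<subseteq> W" using p by (auto simp: W_def)
    moreover have "x \<notin> R" using K(3) djQR by auto
    ultimately show ?thesis using swap[OF nc lk _ K(1) K(2) cR K(4) _ K(5) W(1)] jl by auto
  qed
  have exY: "\<exists>Y. is_clique V E k Y \<and> kconn V E k U Y \<and> P \<union> R \<union> {v s} \<subseteq> Y"
    if s: "s \<in> {j+1..l}" for s
  proof (rule build_Y[OF G k1 deg Vne _ Uc UPQR djQR djPQ])
    show "u s \<in> Q" using s by (auto simp: Q_def)
    show "v s \<notin> P \<union> R" "v s \<in> V" "\<forall>a\<in>P \<union> R. E (v s) a" using vPR vV vadj s by auto
  qed (use swapH in blast)
  then have "\<forall>s\<in>{j+1..l}. \<exists>Y. is_clique V E k Y \<and> kconn V E k U Y \<and> P \<union> R \<union> {v s} \<subseteq> Y"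
    by blast
  from bchoice[OF this] obtain Yf where
    Yf0: "\<forall>s\<in>{j+1..l}. is_clique V E k (Yf s) \<and> kconn V E k U (Yf s) \<and> P \<union> R \<union> {v s} \<subseteq> Yf s"
    by blast
  have Yf: "is_clique V E k (Yf s)" "kconn V E k U (Yf s)" "P \<union> R \<union> {v s} \<subseteq> Yf s"
    if "s \<in> {j+1..l}" for s using Yf0 that by auto
  have nXY: "\<not> kconn V E k X (Yf s)" if "s \<in> {j+1..l}" for s
  proof
    assume "kconn V E k X (Yf s)"
    then have "kconn V E k (Yf s) X" by (rule kconn_sym)
    with Yf(2)[OF that] have "kconn V E k U X" by (rule kconn_trans)
    then show False using nUX by simp
  qed
  define u2 where "u2 i = (if i \<le> j then u i else if i \<le> l then v i else u i)" for i
  have u2a: "u2 ` {1..j} = P" unfolding P_def by (rule image_cong) (auto simp: u2_def)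
  have u2b: "u2 ` {j+1..l} = D" unfolding D_def by (rule image_cong) (auto simp: u2_def)
  have u2c: "u2 ` {l+1..k} = R" unfolding R_def by (rule image_cong) (auto simp: u2_def)
  have u2k: "u2 ` {1..k} = X" unfolding X_def using ivl u2a u2b u2c by (simp add: image_Un)
  have u2j: "u2 (j+1) = v (j+1)" using jl by (simp add: u2_def)
  have "{1..j+1} = insert (j+1) {1..j}" by auto
  then have u2a': "u2 ` {1..j+1} = P \<union> {v (j+1)}" using u2a u2j by auto
  have u2p: "u2 p = v p" if "j < p" "p \<le> l" for p using that by (simp add: u2_def)
  have s1: "j+1 \<in> {j+1..l}" using jl by simp
  define B where "B = P \<union> {v (j+1)} \<union> R"
  define Z where "Z = Yf (j+1) - B"
  have fB: "finite B" using fPR by (simp add: B_def)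
  have cB: "card B = j + 1 + (k - l)"
  proof -
    have "B = insert (v (j+1)) (P \<union> R)" by (auto simp: B_def)
    then show ?thesis using vPR[OF s1] cPR fPR by simp
  qed
  have BY: "B \<subseteq> Yf (j+1)" using Yf(3)[OF s1] by (auto simp: B_def)
  have fY1: "finite (Yf (j+1))" "card (Yf (j+1)) = k" using Yf(1)[OF s1] by (auto simp: is_clique_def)
  have "card Z = l - j - 1" unfolding Z_def using card_Diff_subset[OF fB BY] fY1 cB jl lk by simp
  then have "card Z = card {j+1+1..l}" by simp
  moreover have "finite Z" using fY1 by (simp add: Z_def)
  ultimately obtain f where f: "f ` {j+1+1..l} = Z" using ex_img by blast
  have "\<forall>p\<in>{j+1..l}. \<exists>g. g ` {1..l-1} = Yf p - insert (v p) R"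
  proof
    fix p assume p: "p \<in> {j+1..l}"
    have sub: "insert (v p) R \<subseteq> Yf p" using Yf(3)[OF p] by auto
    have fYp: "finite (Yf p)" "card (Yf p) = k" using Yf(1)[OF p] by (auto simp: is_clique_def)
    have "card (insert (v p) R) = k - l + 1" using vPR[OF p] cR fPR by simp
    then have "card (Yf p - insert (v p) R) = l - 1"
      using card_Diff_subset[OF finite_subset[OF sub fYp(1)] sub] fYp lk jl by simp
    then have "card (Yf p - insert (v p) R) = card {1..l-1}" by simp
    moreover have "finite (Yf p - insert (v p) R)" using fYp(1) by (rule finite_Diff)
    ultimately show "\<exists>g. g ` {1..l-1} = Yf p - insert (v p) R"
      using ex_img[of "Yf p - insert (v p) R" "{1..l-1}"] by simp
  qed
  from bchoice[OF this] obtain gf where gf: "\<forall>p\<in>{j+1..l}. gf p ` {1..l-1} = Yf p - insert (v p) R"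
    by blast
  have set2: "u2 ` {1..j+1} \<union> f ` {j+1+1..l} \<union> u2 ` {l+1..k} = Yf (j+1)"
    using u2a' f u2c BY by (auto simp: Z_def B_def)
  have set3: "insert (u2 p) (gf p ` {1..l-1}) \<union> u2 ` {l+1..k} = Yf p" if "j + 1 < p" "p \<le> l" for p
  proof -
    have p: "p \<in> {j+1..l}" using that by simp
    show ?thesis using u2p[of p] that gf p u2c Yf(3)[OF p] by auto
  qed
  have "config V E k (j+1) l"
    unfolding config_def
    apply (rule exI[of _ u2], rule exI[of _ f], rule exI[of _ gf])
    apply (intro conjI)
    subgoal using u2k Xc by simp
    subgoal using set2 Yf(1)[OF s1] by simp
    subgoal using set2 u2k nXY[OF s1] by simp
    subgoal
    proof (intro allI impI)
      fix p assume p0: "j + 1 < p \<and> p \<le> l"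
      then have p: "p \<in> {j+1..l}" by simp
      show "is_clique V E k (insert (u2 p) (gf p ` {1..l-1}) \<union> u2 ` {l+1..k}) \<and>
        \<not> kconn V E k (u2 ` {1..k}) (insert (u2 p) (gf p ` {1..l-1}) \<union> u2 ` {l+1..k})"
        using set3[of p] p0 Yf(1)[OF p] nXY[OF p] u2k by simp
    qed
    done
  moreover have "\<not> config V E k (j+1) l" using H8 jl by simp
  ultimately show False by simp
qed
end
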